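(* Let $\Omega\subset\mathbb{R}^n$ be a domain with $\mathrm{width}(\Omega)<+\infty$, $f\in L^\infty(\Omega)$, $g\in C(\partial\Omega)\cap L^\infty(\partial\Omega)$, $(\varepsilon_i)$ a sequence of positive numbers with $\varepsilon_i\to0$, and for each $i$ let $u_i:\overline\Omega\to\mathbb{R}$ be a bounded solution of $\Delta^{\varepsilon_i}_\infty u_i=\varepsilon_i^2 f$ in $\Omega$, $u_i=g$ on $\partial\Omega$. Let $r>0$. Then there is a constant $C'_r$ depending on $r$, $\|g\|_\infty$ and $\|f\|_\infty$ such that for every $\delta>0$ there exists $N\in\mathbb{N}$ with the property: for all $i>N$ and all $x,y\in\Omega_r$ with $d(x,y)<\delta$, one has $|u_i(x)-u_i(y)|\le C'_r\delta$.
   Context: $d(x,y)$ is the intrinsic metric of $\overline\Omega$ (infimum of lengths of paths in $\overline\Omega$ from $x$ to $y$); $\mathrm{width}(\Omega)=\sup_{x\in\Omega}\inf_{y\in\partial\Omega}d(y,x)$; $\Omega_r=\{x\in\Omega:\ \inf_{y\in\partial\Omega}d(x,y)>r\}$. For $\varepsilon>0$, $B_x(\varepsilon)=\{y\in\overline\Omega: d(x,y)<\varepsilon\}$ and $\Delta^{\varepsilon}_\infty w(x)=\inf_{y\in B_x(\varepsilon)}w(y)+\sup_{y\in B_x(\varepsilon)}w(y)-2w(x)$. *)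

theory Defs
  imports "HOL-Analysis.Analysis"
begin

definition path_len :: "(real \<Rightarrow> 'a::metric_space) \<Rightarrow> ereal" where
  "path_len \<gamma> = (SUP ts \<in> {ts. sorted ts \<and> set ts \<subseteq> {0..1}}.
      ereal (\<Sum>i<length ts - 1. dist (\<gamma> (ts ! i)) (\<gamma> (ts ! Suc i))))"

text \<open>Intrinsic metric of a set S: infimum of lengths of paths in S from x to y
  (value \<infinity> if no such path has finite length).\<close>
definition intrinsic_dist :: "'a::real_normed_vector set \<Rightarrow> 'a \<Rightarrow> 'a \<Rightarrow> ereal" where
  "intrinsic_dist S x y = (INF \<gamma> \<in> {\<gamma>. path \<gamma> \<and> path_image \<gamma> \<subseteq> S \<and>
      pathstart \<gamma> = x \<and> pathfinish \<gamma> = y}. path_len \<gamma>)"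

definition dOm :: "'a::real_normed_vector set \<Rightarrow> 'a \<Rightarrow> 'a \<Rightarrow> ereal" where
  "dOm \<Omega> x y = intrinsic_dist (closure \<Omega>) x y"

definition width :: "'a::real_normed_vector set \<Rightarrow> ereal" where
  "width \<Omega> = (SUP x \<in> \<Omega>. INF y \<in> frontier \<Omega>. dOm \<Omega> y x)"

definition inner_set :: "'a::real_normed_vector set \<Rightarrow> real \<Rightarrow> 'a set" where
  "inner_set \<Omega> r = {x \<in> \<Omega>. (INF y \<in> frontier \<Omega>. dOm \<Omega> x y) > ereal r}"

definition iball :: "'a::real_normed_vector set \<Rightarrow> 'a \<Rightarrow> real \<Rightarrow> 'a set" where
  "iball \<Omega> x \<epsilon> = {y \<in> closure \<Omega>. dOm \<Omega> x y < ereal \<epsilon>}"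

definition eps_inf_lap :: "'a::real_normed_vector set \<Rightarrow> real \<Rightarrow> ('a \<Rightarrow> real) \<Rightarrow> 'a \<Rightarrow> real" where
  "eps_inf_lap \<Omega> \<epsilon> w x =
     (INF y \<in> iball \<Omega> x \<epsilon>. w y) + (SUP y \<in> iball \<Omega> x \<epsilon>. w y) - 2 * w x"

end

theory Submission
  imports Defs
begin


lemma path_len_ge_dist: "ereal (dist (\<gamma> 0) (\<gamma> 1)) \<le> path_len \<gamma>"
proof -
  have "[0,1::real] \<in> {ts. sorted ts \<and> set ts \<subseteq> {0..1}}" by auto
  hence "ereal (\<Sum>i<length [0,1::real] - 1. dist (\<gamma> ([0,1] ! i)) (\<gamma> ([0,1] ! Suc i))) \<le> path_len \<gamma>"
    unfolding path_len_def by (rule SUP_upper)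
  thus ?thesis by simp
qed

lemma path_len_linepath: "path_len (linepath p q) \<le> ereal (dist p q)"
  unfolding path_len_def
proof (rule SUP_least)
  fix ts :: "real list" assume "ts \<in> {ts. sorted ts \<and> set ts \<subseteq> {0..1}}"
  hence st: "sorted ts" and sub: "set ts \<subseteq> {0..1}" by auto
  have d: "dist (linepath p q a) (linepath p q b) = \<bar>b - a\<bar> * dist p q" for a b
  proof -
    have "linepath p q b - linepath p q a = (b - a) *\<^sub>R (q - p)"
      by (simp add: linepath_def algebra_simps)
    thus ?thesis by (simp add: dist_norm norm_minus_commute[of "linepath p q a"] norm_minus_commute[of q])
  qed
  show "ereal (\<Sum>i<length ts - 1. dist (linepath p q (ts ! i)) (linepath p q (ts ! Suc i))) \<le> ereal (dist p q)"
  proof (cases "length ts")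
    case 0 thus ?thesis by simp
  next
    case (Suc n)
    have "(\<Sum>i<length ts - 1. dist (linepath p q (ts ! i)) (linepath p q (ts ! Suc i)))
        = (\<Sum>i<n. (ts ! Suc i - ts ! i) * dist p q)"
      using Suc st by (intro sum.cong) (auto simp: d sorted_nth_mono)
    also have "\<dots> = (ts ! n - ts ! 0) * dist p q"
      by (simp add: sum_distrib_right[symmetric] sum_lessThan_telescope)
    also have "\<dots> \<le> 1 * dist p q"
    proof (rule mult_right_mono)
      have "ts ! n \<in> set ts" "ts ! 0 \<in> set ts" using Suc by auto
      hence "ts ! n \<le> 1" "ts ! 0 \<ge> 0" using subsetD[OF sub] by auto
      thus "ts ! n - ts ! 0 \<le> 1" by linarith
    qed simp
    finally show ?thesis by simp
  qed
qed

lemma dOm_ge_dist: "ereal (dist x y) \<le> dOm \<Omega> x y"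
  unfolding dOm_def intrinsic_dist_def
  by (rule INF_greatest) (use path_len_ge_dist in \<open>auto simp: pathstart_def pathfinish_def\<close>)

lemma dOm_le_seg: "closed_segment x y \<subseteq> closure \<Omega> \<Longrightarrow> dOm \<Omega> x y \<le> ereal (dist x y)"
  unfolding dOm_def intrinsic_dist_def
  by (rule INF_lower2[of "linepath x y"]) (auto intro: path_len_linepath)

lemma iball_dist: "y \<in> iball \<Omega> x e \<Longrightarrow> dist x y < e \<and> y \<in> closure \<Omega>"
proof -
  assume a: "y \<in> iball \<Omega> x e"
  hence "dOm \<Omega> x y < ereal e" unfolding iball_def by auto
  hence "ereal (dist x y) < ereal e" using dOm_ge_dist[of x y \<Omega>] by (meson order.strict_trans1)
  thus ?thesis using a unfolding iball_def by simp
qed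

lemma iball_intro: "closed_segment x y \<subseteq> closure \<Omega> \<Longrightarrow> dist x y < e \<Longrightarrow> y \<in> iball \<Omega> x e"
  unfolding iball_def using dOm_le_seg[of x y \<Omega>] by (auto intro: le_less_trans)

lemma ball_sub_iball: "ball x e \<subseteq> \<Omega> \<Longrightarrow> y \<in> ball x e \<Longrightarrow> y \<in> iball \<Omega> x e"
proof (rule iball_intro)
  assume a: "ball x e \<subseteq> \<Omega>" "y \<in> ball x e"
  hence d: "dist x y < e" by simp
  have "0 \<le> dist x y" by simp
  hence "e > 0" using d by linarith
  hence "x \<in> ball x e" by simp
  hence "closed_segment x y \<subseteq> ball x e" using a closed_segment_subset[of x "ball x e" y] by auto
  thus "closed_segment x y \<subseteq> closure \<Omega>" using a closure_subset[of \<Omega>] by auto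
  show "dist x y < e" using a by auto
qed

lemma self_iball: "x \<in> closure \<Omega> \<Longrightarrow> e > 0 \<Longrightarrow> x \<in> iball \<Omega> x e"
  by (rule iball_intro) auto



lemma nearest_frontier:
  fixes \<Omega> :: "'a::euclidean_space set"
  assumes "open \<Omega>" "frontier \<Omega> \<noteq> {}" "x \<in> \<Omega>"
  obtains y where "y \<in> frontier \<Omega>" "dist x y = infdist x (frontier \<Omega>)"
    "ball x (infdist x (frontier \<Omega>)) \<subseteq> \<Omega>" "infdist x (frontier \<Omega>) > 0"
proof -
  have cl: "closed (frontier \<Omega>)" by simp
  obtain y where y: "y \<in> frontier \<Omega>" "infdist x (frontier \<Omega>) = dist x y"
    using infdist_attains_inf[OF cl assms(2)] by blast
  have xn: "x \<notin> frontier \<Omega>" using assms(1,3) by (simp add: frontier_def interior_open)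
  have pos: "infdist x (frontier \<Omega>) > 0"
    by (rule infdist_pos_not_in_closed[OF cl assms(2) xn])
  have "ball x (infdist x (frontier \<Omega>)) \<subseteq> \<Omega>"
  proof (rule ccontr)
    assume "\<not> ?thesis"
    hence "ball x (infdist x (frontier \<Omega>)) - \<Omega> \<noteq> {}" by auto
    moreover have "x \<in> ball x (infdist x (frontier \<Omega>)) \<inter> \<Omega>" using pos assms(3) by simp
    hence "ball x (infdist x (frontier \<Omega>)) \<inter> \<Omega> \<noteq> {}" by blast
    ultimately have "ball x (infdist x (frontier \<Omega>)) \<inter> frontier \<Omega> \<noteq> {}"
      using connected_Int_frontier[of "ball x (infdist x (frontier \<Omega>))" \<Omega>] by auto
    then obtain w where "w \<in> frontier \<Omega>" "dist x w < infdist x (frontier \<Omega>)" by auto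
    thus False using infdist_le[of w "frontier \<Omega>" x] by linarith
  qed
  thus ?thesis using that y pos by auto
qed

lemma inner_ball:
  fixes \<Omega> :: "'a::euclidean_space set"
  assumes "open \<Omega>" "frontier \<Omega> \<noteq> {}" "x \<in> inner_set \<Omega> r"
  shows "ball x r \<subseteq> \<Omega>"
proof -
  have x: "x \<in> \<Omega>" and I: "(INF y \<in> frontier \<Omega>. dOm \<Omega> x y) > ereal r"
    using assms(3) unfolding inner_set_def by auto
  obtain y where y: "y \<in> frontier \<Omega>" "dist x y = infdist x (frontier \<Omega>)"
    "ball x (infdist x (frontier \<Omega>)) \<subseteq> \<Omega>" "infdist x (frontier \<Omega>) > 0"
    using nearest_frontier[OF assms(1,2) x] by blast
  have "closed_segment x y \<subseteq> cball x (dist x y)"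
    by (rule closed_segment_subset) (auto simp: dist_commute)
  also have "\<dots> = closure (ball x (dist x y))" using y(2,4) by simp
  also have "\<dots> \<subseteq> closure \<Omega>" using y(2,3) by (intro closure_mono) simp
  finally have "dOm \<Omega> x y \<le> ereal (dist x y)" by (rule dOm_le_seg)
  moreover have "(INF y \<in> frontier \<Omega>. dOm \<Omega> x y) \<le> dOm \<Omega> x y" using y(1) by (rule INF_lower)
  ultimately have "ereal r < ereal (dist x y)" using I by (meson order.strict_trans2 order_trans)
  hence "r < infdist x (frontier \<Omega>)" using y(2) by simp
  thus ?thesis using y(3) by (meson order_trans subset_ball less_imp_le)
qed

lemma Inf_neg_image: "(INF y\<in>B. - u y) = - (SUP y\<in>B. (u y::real))"
  by (simp add: Inf_real_def image_image)

lemma Sup_neg_image: "(SUP y\<in>B. - u y) = - (INF y\<in>B. (u y::real))"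
  by (simp add: Inf_real_def image_image)

lemma eps_inf_lap_neg: "eps_inf_lap \<Omega> e (\<lambda>y. - u y) x = - eps_inf_lap \<Omega> e u x"
  unfolding eps_inf_lap_def Inf_neg_image Sup_neg_image by simp



lemma upper_bound:
  fixes \<Omega> :: "'a::euclidean_space set" and u :: "'a \<Rightarrow> real"
  assumes op: "open \<Omega>" and fr: "frontier \<Omega> \<noteq> {}"
    and Wb: "\<forall>x\<in>\<Omega>. infdist x (frontier \<Omega>) \<le> W" and W0: "W \<ge> 0"
    and e0: "0 < e" and e1: "e \<le> 1" and bd: "bounded (u ` closure \<Omega>)"
    and eq: "\<forall>x\<in>\<Omega>. eps_inf_lap \<Omega> e u x \<ge> - (e^2 * F)"
    and bdry: "\<forall>x\<in>frontier \<Omega>. u x \<le> G" and F0: "F \<ge> 0"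
  shows "\<forall>x\<in>closure \<Omega>. u x \<le> G + 2*(F+1)*((W+2)^2 + 4*(W+2) + 1)"
proof -
  define Q where "Q = W+2"
  define h where "h t = 2*Q*t - t^2" for t
  define b where "b = h(2*e) + e^2/2"
  define A where "A = 2*(F+1)"
  define fr where "fr = frontier \<Omega>"
  define vb where "vb x = (if x \<in> \<Omega> then G + A*(h(infdist x fr) + b) else G)" for x
  have Q2: "Q \<ge> 2" using W0 by (simp add: Q_def)
  have A0: "A > 0" using F0 by (simp add: A_def)
  have hmono: "h s \<le> h t" if "0 \<le> s" "s \<le> t" "t \<le> Q" for s t
  proof -
    have "h t - h s = (t-s)*(2*Q-t-s)" by (simp add: h_def power2_eq_square algebra_simps)
    moreover have "(t-s)*(2*Q-t-s) \<ge> 0" using that by (intro mult_nonneg_nonneg) auto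
    ultimately show ?thesis by linarith
  qed
  have hpos: "h t \<ge> 0" if "0 \<le> t" "t \<le> 2*Q" for t
  proof -
    have "h t = t*(2*Q-t)" by (simp add: h_def power2_eq_square algebra_simps)
    thus ?thesis using that by simp
  qed
  have hle: "h t \<le> Q^2" for t
  proof -
    have "Q^2 - h t = (Q-t)^2" by (simp add: h_def power2_eq_square algebra_simps)
    moreover have "(Q-t)^2 \<ge> 0" by simp
    ultimately show ?thesis by linarith
  qed
  have b0: "b \<ge> 0" unfolding b_def using hpos[of "2*e"] e0 e1 Q2 by simp
  have b1: "b \<le> 4*Q + 1"
  proof -
    have "h (2*e) = 4*Q*e - 4*e^2" by (simp add: h_def power2_eq_square algebra_simps)
    moreover have "Q*e \<le> Q" using e1 Q2 by (simp add: mult_left_le)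
    moreover have "e^2 \<ge> 0" by simp
    ultimately have "h (2*e) \<le> 4*Q" by linarith
    moreover have "e^2 \<le> 1" using e0 e1 by (simp add: power_le_one)
    ultimately show ?thesis unfolding b_def by linarith
  qed
  have fr_dis: "y \<notin> \<Omega>" if "y \<in> fr" for y
    using that op by (simp add: fr_def frontier_def interior_open)
  have cl_split: "x \<in> \<Omega> \<or> x \<in> fr" if "x \<in> closure \<Omega>" for x
    using that op by (auto simp: fr_def frontier_def interior_open)
  have vge: "vb x \<ge> G" for x
  proof (cases "x \<in> \<Omega>")
    case True
    have "infdist x fr \<le> W" using Wb True by (simp add: fr_def)
    hence "h (infdist x fr) \<ge> 0" using Q2 by (intro hpos) (auto simp: Q_def infdist_nonneg)
    thus ?thesis using True A0 b0 by (simp add: vb_def)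
  qed (simp add: vb_def)
  have vle: "vb x \<le> G + A*(Q^2 + 4*Q + 1)" for x
  proof (cases "x \<in> \<Omega>")
    case True
    have "h (infdist x fr) + b \<le> Q^2 + 4*Q + 1" using hle[of "infdist x fr"] b1 by linarith
    thus ?thesis using True A0 by (simp add: vb_def)
  next
    case False
    have "Q^2 + 4*Q + 1 \<ge> 0" using Q2 by simp
    thus ?thesis using False A0 by (simp add: vb_def)
  qed
  obtain Bu where Bu: "\<forall>x\<in>closure \<Omega>. \<bar>u x\<bar> \<le> Bu"
    using bd unfolding bounded_iff by auto
  have main: "\<forall>x\<in>closure \<Omega>. u x \<le> vb x"
  proof (rule ccontr)
    assume "\<not> ?thesis"
    then obtain x0 where x0: "x0 \<in> closure \<Omega>" "u x0 > vb x0" by auto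
    have bddD: "bdd_above ((\<lambda>x. u x - vb x) ` closure \<Omega>)"
    proof (rule bdd_aboveI2[of _ _ "Bu - G"])
      fix x assume "x \<in> closure \<Omega>"
      hence "\<bar>u x\<bar> \<le> Bu" using Bu by blast
      thus "u x - vb x \<le> Bu - G" using vge[of x] by linarith
    qed
    define m where "m = (SUP x\<in>closure \<Omega>. u x - vb x)"
    have mup: "u y - vb y \<le> m" if "y \<in> closure \<Omega>" for y
      unfolding m_def using bddD that by (rule cSUP_upper2) simp
    have m0: "m > 0" using mup[OF x0(1)] x0(2) by linarith
    define \<theta> where "\<theta> = min (m/2) (e^2/4)"
    have th0: "\<theta> > 0" using m0 e0 by (simp add: \<theta>_def)
    have "m - \<theta> < m" using th0 by simp
    moreover have "closure \<Omega> \<noteq> {}" using x0(1) by auto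
    ultimately obtain x where x: "x \<in> closure \<Omega>" "m - \<theta> < u x - vb x"
      using less_cSUP_iff[of "closure \<Omega>" "\<lambda>x. u x - vb x" "m - \<theta>"] bddD x0(1)
      unfolding m_def by blast
    have xO: "x \<in> \<Omega>"
    proof (rule ccontr)
      assume "x \<notin> \<Omega>"
      hence "x \<in> fr" using cl_split x(1) by blast
      hence "u x - vb x \<le> 0" using bdry \<open>x \<notin> \<Omega>\<close> by (simp add: vb_def fr_def)
      moreover have "\<theta> \<le> m/2" by (simp add: \<theta>_def)
      ultimately show False using x(2) m0 by linarith
    qed
    define \<rho> where "\<rho> = infdist x fr"
    obtain y0 where y0: "y0 \<in> fr" "dist x y0 = \<rho>" "ball x \<rho> \<subseteq> \<Omega>" "\<rho> > 0"
      using nearest_frontier[OF op fr xO] unfolding \<rho>_def fr_def by blast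
    have rW: "\<rho> \<le> W" using Wb xO by (simp add: \<rho>_def fr_def)
    define B where "B = iball \<Omega> x e"
    have BO: "B \<subseteq> closure \<Omega>" unfolding B_def iball_def by auto
    have Bne: "B \<noteq> {}" using self_iball[OF x(1) e0] by (auto simp: B_def)
    have uB: "\<bar>u y\<bar> \<le> Bu" if "y \<in> B" for y using Bu BO that by blast
    have bddA: "bdd_above (u ` B)" by (rule bdd_aboveI2[where M=Bu]) (use uB abs_le_D1 in blast)
    have bddB: "bdd_below (u ` B)" by (rule bdd_belowI2[where m="-Bu"]) (use uB abs_le_D2 in force)
    define hi where "hi = G + A*(h(\<rho>+e)+b)"
    have vB: "vb y \<le> hi" if "y \<in> B" for y
    proof (cases "y \<in> \<Omega>")
      case True
      have "dist x y < e" using that iball_dist unfolding B_def by blast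
      hence "infdist y fr < \<rho> + e" using infdist_triangle[of y fr x] by (simp add: \<rho>_def dist_commute)
      hence "h (infdist y fr) \<le> h (\<rho> + e)" using rW e1 by (intro hmono) (auto simp: infdist_nonneg Q_def)
      thus ?thesis using True A0 by (simp add: vb_def hi_def)
    next
      case False
      have "h (\<rho>+e) \<ge> 0" using rW e1 y0(4) e0 by (intro hpos) (auto simp: Q_def)
      thus ?thesis using False A0 b0 by (simp add: vb_def hi_def)
    qed
    have SupB: "(SUP y\<in>B. u y) \<le> hi + m"
      by (rule cSUP_least[OF Bne]) (use mup vB BO in \<open>fastforce\<close>)
    have zex: "\<exists>z\<in>B. vb z + hi - 2 * vb x \<le> -(F+1)*e^2"
    proof (cases "\<rho> < e")
      case True
      have "closed_segment x y0 \<subseteq> cball x (dist x y0)"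
        by (rule closed_segment_subset) (auto simp: dist_commute)
      also have "\<dots> = closure (ball x (dist x y0))" using y0(2,4) by simp
      also have "\<dots> \<subseteq> closure \<Omega>" using y0(2,3) by (intro closure_mono) simp
      finally have "y0 \<in> B" unfolding B_def using True y0(2) by (intro iball_intro) auto
      moreover have "vb y0 = G" using fr_dis[OF y0(1)] by (simp add: vb_def)
      moreover have "h (\<rho>+e) \<le> h (2*e)" using True e1 Q2 y0(4) by (intro hmono) auto
      moreover have "h \<rho> \<ge> 0" using rW y0(4) by (intro hpos) (auto simp: Q_def)
      moreover have "vb x = G + A*(h \<rho> + b)" using xO by (simp add: vb_def \<rho>_def)
      moreover have "A * (h (\<rho>+e) - 2 * h \<rho> - b) \<le> A * (-(e^2/2))"
        using calculation(3,4) A0 by (intro mult_left_mono) (auto simp: b_def)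
      ultimately have "vb y0 + hi - 2 * vb x = A * (h (\<rho>+e) - 2 * h \<rho> - b)"
        by (simp add: hi_def algebra_simps)
      moreover have "A * (-(e^2/2)) = -(F+1)*e^2" by (simp add: A_def algebra_simps)
      ultimately show ?thesis using \<open>y0 \<in> B\<close> \<open>A * (h (\<rho>+e) - 2 * h \<rho> - b) \<le> A * (-(e^2/2))\<close>
        by (intro bexI[of _ y0]) linarith+
    next
      case False
      define \<tau> where "\<tau> = e^2/(4*Q)"
      define s where "s = e - \<tau>"
      have t0: "\<tau> > 0" using e0 Q2 by (simp add: \<tau>_def)
      have "\<tau> \<le> e/8"
      proof -
        have "e^2 \<le> e" using e0 e1 by (simp add: power2_eq_square mult_left_le)
        hence "e^2/(4*Q) \<le> e/(4*2)" using Q2 e0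
          by (intro frac_le) auto
        thus ?thesis by (simp add: \<tau>_def)
      qed
      hence s0: "0 < s" "s < e" using t0 e0 by (auto simp: s_def)
      define z where "z = x + (s/\<rho>) *\<^sub>R (y0 - x)"
      have dxz: "dist x z = s"
        using y0(2,4) s0 by (simp add: z_def dist_norm norm_minus_commute[of x y0])
      have "y0 - z = (1 - s/\<rho>) *\<^sub>R (y0 - x)" by (simp add: z_def algebra_simps)
      hence "dist z y0 = (1 - s/\<rho>) * \<rho>"
        using y0(2,4) s0 False by (simp add: dist_norm norm_minus_commute[of z y0] norm_minus_commute[of y0 x] dist_commute)
      hence dzy: "dist z y0 = \<rho> - s" using y0(4) by (simp add: algebra_simps)
      have zb: "z \<in> ball x \<rho>" using dxz s0 False by simp
      have "closed_segment x z \<subseteq> ball x \<rho>"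
        by (rule closed_segment_subset) (use zb y0(4) in auto)
      hence "closed_segment x z \<subseteq> closure \<Omega>" using y0(3) closure_subset by blast
      hence zB: "z \<in> B" unfolding B_def using dxz s0 by (intro iball_intro) auto
      have zO: "z \<in> \<Omega>" using zb y0(3) by blast
      have "infdist z fr \<le> \<rho> - s" using infdist_le[OF y0(1), of z] dzy by simp
      hence hz: "h (infdist z fr) \<le> h (\<rho> - s)" using rW s0 by (intro hmono) (auto simp: infdist_nonneg Q_def)
      have key: "h (\<rho>-s) + h(\<rho>+e) - 2*h \<rho> = 2*Q*\<tau> - 2*\<rho>*\<tau> - s^2 - e^2"
        by (simp add: h_def s_def power2_eq_square algebra_simps)
      have "2*Q*\<tau> = e^2/2" using Q2 by (simp add: \<tau>_def)
      hence "h (\<rho>-s) + h(\<rho>+e) - 2*h \<rho> \<le> -(e^2/2)"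
      proof -
        have "\<rho>*\<tau> \<ge> 0" using t0 y0(4) by simp
        moreover have "s^2 \<ge> 0" by simp
        ultimately show ?thesis using key \<open>2*Q*\<tau> = e^2/2\<close> by linarith
      qed
      hence "A * (h (infdist z fr) + h(\<rho>+e) - 2*h \<rho>) \<le> A * (-(e^2/2))"
        using hz A0 by (intro mult_left_mono) auto
      moreover have "vb x = G + A*(h \<rho> + b)" using xO by (simp add: vb_def \<rho>_def)
      moreover have "vb z = G + A*(h (infdist z fr) + b)" using zO by (simp add: vb_def)
      ultimately have "vb z + hi - 2 * vb x = A * (h (infdist z fr) + h(\<rho>+e) - 2*h \<rho>)"
        by (simp add: hi_def algebra_simps)
      moreover have "A * (-(e^2/2)) = -(F+1)*e^2" by (simp add: A_def algebra_simps)
      ultimately show ?thesis using zB \<open>A * (h (infdist z fr) + h(\<rho>+e) - 2*h \<rho>) \<le> A * (-(e^2/2))\<close>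
        by (intro bexI[of _ z]) linarith+
    qed
    then obtain z where z: "z \<in> B" "vb z + hi - 2 * vb x \<le> -(F+1)*e^2" by blast
    have "(INF y\<in>B. u y) \<le> u z" using bddB z(1) by (rule cINF_lower2) simp
    also have "\<dots> \<le> vb z + m" using mup[of z] z(1) BO by force
    finally have InfB: "(INF y\<in>B. u y) \<le> vb z + m" .
    have "eps_inf_lap \<Omega> e u x \<ge> - (e^2 * F)" using eq xO by blast
    hence E: "(INF y\<in>B. u y) + (SUP y\<in>B. u y) - 2 * u x \<ge> - (e^2 * F)"
      unfolding eps_inf_lap_def B_def .
    have "\<theta> \<le> e^2/4" by (simp add: \<theta>_def)
    moreover have "-(F+1)*e^2 = -(e^2*F) - e^2" by (simp add: algebra_simps)
    moreover have "e^2 > 0" using e0 by simp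
    ultimately show False using E InfB SupB z(2) x(2) by linarith
  qed
  show ?thesis
  proof
    fix x assume "x \<in> closure \<Omega>"
    hence "u x \<le> vb x" using main by blast
    also have "\<dots> \<le> G + A*(Q^2 + 4*Q + 1)" by (rule vle)
    finally show "u x \<le> G + 2*(F+1)*((W+2)^2 + 4*(W+2) + 1)" by (simp add: A_def Q_def)
  qed
qed



lemma slope:
  fixes \<Omega> :: "'a::euclidean_space set" and u :: "'a \<Rightarrow> real"
  assumes op: "open \<Omega>" and e0: "0 < e" and e1: "e \<le> 1" and eR: "4*e \<le> R"
    and M: "\<forall>x\<in>closure \<Omega>. \<bar>u x\<bar> \<le> M"
    and eq: "\<forall>x\<in>\<Omega>. eps_inf_lap \<Omega> e u x = e^2 * f x" and F: "\<forall>x\<in>\<Omega>. \<bar>f x\<bar> \<le> F"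
    and bz: "ball z R \<subseteq> \<Omega>"
  shows "(SUP y\<in>iball \<Omega> z e. u y) - u z \<le> e * (8*M/R + 1 + R*(F+1)/2)"
proof -
  have R0: "R > 0" using e0 eR by linarith
  have zO: "z \<in> \<Omega>" using bz R0 by auto
  have zc: "z \<in> closure \<Omega>" using zO closure_subset by blast
  have M0: "M \<ge> 0" using M zc by force
  have F0: "F \<ge> 0" using F zO by force
  define Sp where "Sp x = (SUP y\<in>iball \<Omega> x e. u y)" for x
  define In where "In x = (INF y\<in>iball \<Omega> x e. u y)" for x
  have ibc: "iball \<Omega> x e \<subseteq> closure \<Omega>" for x unfolding iball_def by auto
  have uI: "\<bar>u y\<bar> \<le> M" if "y \<in> iball \<Omega> x e" for x y using M ibc that by blast
  have bddA: "bdd_above (u ` iball \<Omega> x e)" for x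
    by (rule bdd_aboveI2[where M=M]) (use uI abs_le_D1 in blast)
  have bddB: "bdd_below (u ` iball \<Omega> x e)" for x
    by (rule bdd_belowI2[where m="-M"]) (use uI abs_le_D2 in force)
  have Inle: "In x \<le> u y" if "y \<in> iball \<Omega> x e" for x y
    unfolding In_def using bddB that by (rule cINF_lower2) simp
  define \<eta> where "\<eta> = e^2"
  have eta0: "\<eta> > 0" using e0 by (simp add: \<eta>_def)
  define nxt where "nxt x = (SOME y. y \<in> iball \<Omega> x e \<and> Sp x - \<eta> < u y)" for x
  have nxt: "nxt x \<in> iball \<Omega> x e \<and> Sp x - \<eta> < u (nxt x)" if "x \<in> closure \<Omega>" for x
  proof -
    have ne: "iball \<Omega> x e \<noteq> {}" using self_iball[OF that e0] by blast
    have "Sp x - \<eta> < Sp x" using eta0 by simp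
    hence "\<exists>y\<in>iball \<Omega> x e. Sp x - \<eta> < u y"
      using less_cSUP_iff[OF ne bddA] unfolding Sp_def by blast
    hence "\<exists>y. y \<in> iball \<Omega> x e \<and> Sp x - \<eta> < u y" by blast
    thus ?thesis unfolding nxt_def by (rule someI_ex)
  qed
  define X where "X k = (nxt ^^ k) z" for k
  have X0: "X 0 = z" by (simp add: X_def)
  have XS: "X (Suc k) = nxt (X k)" for k by (simp add: X_def)
  have Xc: "X k \<in> closure \<Omega>" for k
  proof (induction k)
    case 0 thus ?case using zc X0 by simp
  next
    case (Suc k) thus ?case using nxt[OF Suc] ibc XS by auto
  qed
  have Xst: "X (Suc k) \<in> iball \<Omega> (X k) e" "Sp (X k) - \<eta> < u (X (Suc k))" for k
    using nxt[OF Xc[of k]] XS[of k] by auto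
  have Xd1: "dist (X k) (X (Suc k)) < e" for k using iball_dist[OF Xst(1)[of k]] by blast
  have Xd: "dist z (X k) \<le> k*e" for k
  proof (induction k)
    case 0 thus ?case using X0 by simp
  next
    case (Suc k)
    have "dist z (X (Suc k)) \<le> dist z (X k) + dist (X k) (X (Suc k))" by (rule dist_triangle)
    thus ?case using Suc Xd1[of k] by (simp add: algebra_simps)
  qed
  define t where "t = R/(2*e)"
  have t2: "t \<ge> 2" using eR e0 by (simp add: t_def field_simps)
  define n where "n = nat \<lfloor>t\<rfloor>"
  have nt: "real n \<le> t" "real n > t - 1" using t2 by (simp_all add: n_def)
  have n1: "real n \<ge> R/(4*e)" using nt(2) t2 by (simp add: t_def field_simps)
  have ne1: "real n * e \<le> R/2" using nt(1) e0 by (simp add: t_def field_simps)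
  have npos: "real n > 0" using nt t2 by linarith
  have deep: "ball (X k) e \<subseteq> \<Omega> \<and> X k \<in> \<Omega>" if "k \<le> n" for k
  proof -
    have "real k * e \<le> real n * e" using that e0 by (simp add: mult_right_mono)
    hence dk: "dist z (X k) \<le> R/2" using Xd[of k] ne1 by linarith
    have "ball (X k) e \<subseteq> ball z R"
    proof
      fix y assume "y \<in> ball (X k) e"
      hence "dist (X k) y < e" by simp
      moreover have "dist z y \<le> dist z (X k) + dist (X k) y" by (rule dist_triangle)
      ultimately have "dist z y < R" using dk eR e0 by linarith
      thus "y \<in> ball z R" by simp
    qed
    moreover have "X k \<in> ball (X k) e" using e0 by simp
    ultimately show ?thesis using bz by blast
  qed
  have eqX: "In (X k) + Sp (X k) - 2 * u (X k) = e^2 * f (X k)" if "k \<le> n" for k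
    using eq deep[OF that] unfolding eps_inf_lap_def In_def Sp_def by blast
  have fX: "f (X k) \<ge> -F" if "k \<le> n" for k using F deep[OF that] by force
  define D where "D k = u (X (Suc k)) - u (X k)" for k
  define S0 where "S0 = Sp z - u z"
  define c where "c = e^2 * F + \<eta>"
  have c0: "c \<ge> 0" using F0 eta0 by (simp add: c_def)
  have D0: "D 0 > S0 - \<eta>" using Xst(2)[of 0] X0 by (simp add: D_def S0_def)
  have Dstep: "D (Suc k) \<ge> D k - c" if "k < n" for k
  proof -
    have "X k \<in> ball (X (Suc k)) e" using Xd1[of k] by (simp add: dist_commute)
    hence "X k \<in> iball \<Omega> (X (Suc k)) e" using deep[of "Suc k"] that by (intro ball_sub_iball) auto
    hence I1: "In (X (Suc k)) \<le> u (X k)" by (rule Inle)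
    have E: "In (X (Suc k)) + Sp (X (Suc k)) - 2 * u (X (Suc k)) = e^2 * f (X (Suc k))"
      using eqX[of "Suc k"] that by simp
    have "e^2 * f (X (Suc k)) \<ge> e^2 * (-F)" using fX[of "Suc k"] that by (intro mult_left_mono) auto
    moreover have "Sp (X (Suc k)) - \<eta> < u (X (Suc (Suc k)))" by (rule Xst(2))
    ultimately show ?thesis using I1 E by (simp add: D_def c_def)
  qed
  have ind: "D k \<ge> S0 - \<eta> - real k * c \<and> u (X k) - u z \<ge> real k * (S0 - \<eta>) - (real k)^2 * c"
    if "k \<le> n" for k
    using that
  proof (induction k)
    case 0 thus ?case using D0 X0 by simp
  next
    case (Suc k)
    hence IH: "D k \<ge> S0 - \<eta> - real k * c" "u (X k) - u z \<ge> real k * (S0 - \<eta>) - (real k)^2 * c"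
      by auto
    have "D (Suc k) \<ge> D k - c" using Suc.prems by (intro Dstep) simp
    moreover have "real (Suc k) * c = real k * c + c" by (simp add: algebra_simps)
    ultimately have A1: "D (Suc k) \<ge> S0 - \<eta> - real (Suc k) * c" using IH(1) by linarith
    have "u (X (Suc k)) - u z = (u (X k) - u z) + D k" by (simp add: D_def)
    moreover have "real (Suc k) * (S0 - \<eta>) = real k * (S0 - \<eta>) + (S0 - \<eta>)" by (simp add: algebra_simps)
    moreover have "(real (Suc k))^2 * c = (real k)^2 * c + 2 * (real k * c) + c"
      by (simp add: power2_eq_square algebra_simps)
    moreover have "real k * c \<ge> 0" using c0 by simp
    ultimately have "u (X (Suc k)) - u z \<ge> real (Suc k) * (S0 - \<eta>) - (real (Suc k))^2 * c"
      using IH c0 by linarith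
    thus ?case using A1 by blast
  qed
  have "u (X n) - u z \<le> 2*M" using M Xc[of n] zc by (smt (verit, best))
  hence main: "real n * (S0 - \<eta>) - (real n)^2 * c \<le> 2*M" using ind[of n] by linarith
  have S0b: "S0 \<le> 2*M/real n + \<eta> + real n * c"
  proof -
    have "real n * (S0 - \<eta> - real n * c) \<le> 2*M" using main by (simp add: power2_eq_square algebra_simps)
    hence "S0 - \<eta> - real n * c \<le> 2*M / real n" using npos by (simp add: field_simps)
    thus ?thesis by linarith
  qed
  have b1: "2*M/real n \<le> 8*M*e/R"
  proof -
    have "2*M/real n \<le> 2*M/(R/(4*e))" using M0 n1 R0 e0 npos by (intro divide_left_mono) (auto intro: mult_pos_pos)
    thus ?thesis using e0 by (simp add: field_simps)
  qed
  have b2: "\<eta> \<le> e" using e0 e1 by (simp add: \<eta>_def power2_eq_square mult_left_le)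
  have b3: "real n * c \<le> R/2 * (e*(F+1))"
  proof -
    have "real n * c = (real n * e) * (e*(F+1))"
      by (simp add: c_def \<eta>_def power2_eq_square algebra_simps)
    also have "\<dots> \<le> R/2 * (e*(F+1))" using ne1 e0 F0 by (intro mult_right_mono) auto
    finally show ?thesis .
  qed
  have "e * (8*M/R + 1 + R*(F+1)/2) = 8*M*e/R + e + R/2 * (e*(F+1))"
    by (simp add: algebra_simps)
  thus ?thesis using S0b b1 b2 b3 unfolding S0_def Sp_def by linarith
qed



lemma local_lip:
  fixes \<Omega> :: "'a::euclidean_space set" and u :: "'a \<Rightarrow> real"
  assumes op: "open \<Omega>" and e0: "0 < e" and e1: "e \<le> 1" and eR: "4*e \<le> R"
    and M: "\<forall>x\<in>closure \<Omega>. \<bar>u x\<bar> \<le> M"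
    and eq: "\<forall>x\<in>\<Omega>. eps_inf_lap \<Omega> e u x = e^2 * f x" and F: "\<forall>x\<in>\<Omega>. \<bar>f x\<bar> \<le> F"
    and bz: "ball z R \<subseteq> \<Omega>" and dzw: "dist z w < e"
  shows "\<bar>u w - u z\<bar> \<le> e * (8*M/R + 1 + R*(F+1)/2)"
proof -
  have "ball z e \<subseteq> ball z R" using eR e0 by (intro subset_ball) linarith
  hence "ball z e \<subseteq> \<Omega>" using bz by blast
  hence wI: "w \<in> iball \<Omega> z e" using dzw by (intro ball_sub_iball) auto
  have ibc: "iball \<Omega> z e \<subseteq> closure \<Omega>" unfolding iball_def by auto
  have uI: "\<bar>u y\<bar> \<le> M" if "y \<in> iball \<Omega> z e" for y using M ibc that by blast
  have bddA: "bdd_above (u ` iball \<Omega> z e)"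
    by (rule bdd_aboveI2[where M=M]) (use uI abs_le_D1 in blast)
  have bddA': "bdd_above ((\<lambda>y. - u y) ` iball \<Omega> z e)"
    by (rule bdd_aboveI2[where M=M]) (use uI abs_le_D2 in force)
  have s1: "(SUP y\<in>iball \<Omega> z e. u y) - u z \<le> e * (8*M/R + 1 + R*(F+1)/2)"
    by (rule slope[OF op e0 e1 eR M eq F bz])
  have M': "\<forall>x\<in>closure \<Omega>. \<bar>- u x\<bar> \<le> M" using M by simp
  have eq': "\<forall>x\<in>\<Omega>. eps_inf_lap \<Omega> e (\<lambda>y. - u y) x = e^2 * (- f x)"
    using eq by (simp add: eps_inf_lap_neg)
  have F': "\<forall>x\<in>\<Omega>. \<bar>- f x\<bar> \<le> F" using F by simp
  have s2: "(SUP y\<in>iball \<Omega> z e. - u y) - (- u z) \<le> e * (8*M/R + 1 + R*(F+1)/2)"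
    by (rule slope[OF op e0 e1 eR M' eq' F' bz])
  have "u w \<le> (SUP y\<in>iball \<Omega> z e. u y)" using bddA wI by (rule cSUP_upper2) simp
  moreover have "- u w \<le> (SUP y\<in>iball \<Omega> z e. - u y)" using bddA' wI by (rule cSUP_upper2) simp
  ultimately show ?thesis using s1 s2 by linarith
qed



lemma u_bound:
  fixes \<Omega> :: "'a::euclidean_space set" and u :: "'a \<Rightarrow> real"
  assumes op: "open \<Omega>" and fr: "frontier \<Omega> \<noteq> {}"
    and Wb: "\<forall>x\<in>\<Omega>. infdist x (frontier \<Omega>) \<le> W" and W0: "W \<ge> 0"
    and e0: "0 < e" and e1: "e \<le> 1" and bd: "bounded (u ` closure \<Omega>)"
    and eq: "\<forall>x\<in>\<Omega>. eps_inf_lap \<Omega> e u x = e^2 * f x" and F: "\<forall>x\<in>\<Omega>. \<bar>f x\<bar> \<le> F"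
    and bdry: "\<forall>x\<in>frontier \<Omega>. \<bar>u x\<bar> \<le> G" and F0: "F \<ge> 0"
  shows "\<forall>x\<in>closure \<Omega>. \<bar>u x\<bar> \<le> G + 2*(F+1)*((W+2)^2 + 4*(W+2) + 1)"
proof -
  have eq1: "\<forall>x\<in>\<Omega>. eps_inf_lap \<Omega> e u x \<ge> - (e^2 * F)"
  proof
    fix x assume "x \<in> \<Omega>"
    hence "f x \<ge> -F" using F by force
    hence "e^2 * f x \<ge> e^2 * (-F)" by (intro mult_left_mono) auto
    thus "eps_inf_lap \<Omega> e u x \<ge> - (e^2 * F)" using eq \<open>x \<in> \<Omega>\<close> by simp
  qed
  have eq2: "\<forall>x\<in>\<Omega>. eps_inf_lap \<Omega> e (\<lambda>y. - u y) x \<ge> - (e^2 * F)"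
  proof
    fix x assume "x \<in> \<Omega>"
    hence "f x \<le> F" using F by force
    hence "e^2 * f x \<le> e^2 * F" by (intro mult_left_mono) auto
    thus "eps_inf_lap \<Omega> e (\<lambda>y. - u y) x \<ge> - (e^2 * F)"
      using eq \<open>x \<in> \<Omega>\<close> by (simp add: eps_inf_lap_neg)
  qed
  have b1: "\<forall>x\<in>frontier \<Omega>. u x \<le> G" using bdry by force
  have b2: "\<forall>x\<in>frontier \<Omega>. - u x \<le> G" using bdry by force
  have bd2: "bounded ((\<lambda>y. - u y) ` closure \<Omega>)"
  proof -
    have "(\<lambda>y. - u y) ` closure \<Omega> = uminus ` (u ` closure \<Omega>)" by (simp add: image_image)
    thus ?thesis using bd by simp
  qed
  have U1: "\<forall>x\<in>closure \<Omega>. u x \<le> G + 2*(F+1)*((W+2)^2 + 4*(W+2) + 1)"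
    by (rule upper_bound[OF op fr Wb W0 e0 e1 bd eq1 b1 F0])
  have U2: "\<forall>x\<in>closure \<Omega>. - u x \<le> G + 2*(F+1)*((W+2)^2 + 4*(W+2) + 1)"
    by (rule upper_bound[OF op fr Wb W0 e0 e1 bd2 eq2 b2 F0])
  show ?thesis using U1 U2 by (simp add: abs_le_iff)
qed



theorem corollary5p3:
  fixes \<Omega> :: "'a::euclidean_space set" and r :: real
  assumes "open \<Omega>" and "connected \<Omega>" and "\<Omega> \<noteq> {}"
    and "width \<Omega> < \<infinity>"
    and "r > 0"
  shows "\<exists>C :: real \<Rightarrow> real \<Rightarrow> real. \<forall>(f :: 'a \<Rightarrow> real) (g :: 'a \<Rightarrow> real)
            (eps :: nat \<Rightarrow> real) (u :: nat \<Rightarrow> 'a \<Rightarrow> real).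
     (f \<in> borel_measurable (lebesgue_on \<Omega>) \<and> bounded (f ` \<Omega>) \<and>
      continuous_on (frontier \<Omega>) g \<and> bounded (g ` frontier \<Omega>) \<and>
      (\<forall>i. eps i > 0) \<and> eps \<longlonglongrightarrow> 0 \<and>
      (\<forall>i. bounded (u i ` closure \<Omega>)) \<and>
      (\<forall>i. \<forall>x\<in>\<Omega>. eps_inf_lap \<Omega> (eps i) (u i) x = (eps i)\<^sup>2 * f x) \<and>
      (\<forall>i. \<forall>x\<in>frontier \<Omega>. u i x = g x))
     \<longrightarrow> (\<forall>\<delta>>0. \<exists>N::nat. \<forall>i>N. \<forall>x\<in>inner_set \<Omega> r. \<forall>y\<in>inner_set \<Omega> r.
            dOm \<Omega> x y < ereal \<delta> \<longrightarrow>
            \<bar>u i x - u i y\<bar> \<le> C (SUP z\<in>frontier \<Omega>. \<bar>g z\<bar>) (SUP z\<in>\<Omega>. \<bar>f z\<bar>) * \<delta>)"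
proof -
  note op = assms(1) and ne = assms(3) and wid = assms(4) and r0 = assms(5)
  have fr: "frontier \<Omega> \<noteq> {}"
  proof
    assume "frontier \<Omega> = {}"
    hence "width \<Omega> = \<infinity>" unfolding width_def using ne by (simp add: top_ereal_def)
    thus False using wid by simp
  qed
  obtain W' where W': "width \<Omega> \<le> ereal W'"
  proof (cases "width \<Omega>")
    case (real a) thus ?thesis using that by auto
  next
    case PInf thus ?thesis using wid by simp
  next
    case MInf thus ?thesis using that by auto
  qed
  define W where "W = max W' 0"
  have W0: "W \<ge> 0" by (simp add: W_def)
  have Wb: "\<forall>x\<in>\<Omega>. infdist x (frontier \<Omega>) \<le> W"
  proof
    fix x assume x: "x \<in> \<Omega>"
    have "ereal (infdist x (frontier \<Omega>)) \<le> (INF y\<in>frontier \<Omega>. dOm \<Omega> y x)"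
    proof (rule INF_greatest)
      fix y assume "y \<in> frontier \<Omega>"
      hence "infdist x (frontier \<Omega>) \<le> dist y x" using infdist_le[of y "frontier \<Omega>" x]
        by (simp add: dist_commute)
      thus "ereal (infdist x (frontier \<Omega>)) \<le> dOm \<Omega> y x"
        using dOm_ge_dist[of y x \<Omega>] by (meson ereal_less_eq(3) order_trans)
    qed
    also have "\<dots> \<le> width \<Omega>" unfolding width_def using x by (rule SUP_upper)
    also have "\<dots> \<le> ereal W" using W' by (simp add: W_def) (meson order_trans max.cobounded1 ereal_less_eq(3))
    finally show "infdist x (frontier \<Omega>) \<le> W" by simp
  qed
  define K where "K F = 2*(F+1)*((W+2)^2 + 4*(W+2) + 1)" for F
  define Mb where "Mb G F = G + K F" for G F
  define lam where "lam G F = 8*Mb G F/(r/2) + 1 + (r/2)*(F+1)/2" for G F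
  define C where "C G F = max (8 * Mb G F / r) (3 * lam G F)" for G F
  show ?thesis
  proof (rule exI[of _ C], (rule allI)+, rule impI)
    fix f g :: "'a \<Rightarrow> real" and eps :: "nat \<Rightarrow> real" and u :: "nat \<Rightarrow> 'a \<Rightarrow> real"
    assume H: "f \<in> borel_measurable (lebesgue_on \<Omega>) \<and> bounded (f ` \<Omega>) \<and>
      continuous_on (frontier \<Omega>) g \<and> bounded (g ` frontier \<Omega>) \<and>
      (\<forall>i. eps i > 0) \<and> eps \<longlonglongrightarrow> 0 \<and>
      (\<forall>i. bounded (u i ` closure \<Omega>)) \<and>
      (\<forall>i. \<forall>x\<in>\<Omega>. eps_inf_lap \<Omega> (eps i) (u i) x = (eps i)\<^sup>2 * f x) \<and>
      (\<forall>i. \<forall>x\<in>frontier \<Omega>. u i x = g x)"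
    hence fb: "bounded (f ` \<Omega>)" and gb: "bounded (g ` frontier \<Omega>)"
      and epos: "\<And>i. eps i > 0" and elim: "eps \<longlonglongrightarrow> 0"
      and ub: "\<And>i. bounded (u i ` closure \<Omega>)"
      and ueq: "\<And>i. \<forall>x\<in>\<Omega>. eps_inf_lap \<Omega> (eps i) (u i) x = (eps i)^2 * f x"
      and ubd: "\<And>i. \<forall>x\<in>frontier \<Omega>. u i x = g x" by auto
    define G where "G = (SUP z\<in>frontier \<Omega>. \<bar>g z\<bar>)"
    define F where "F = (SUP z\<in>\<Omega>. \<bar>f z\<bar>)"
    obtain Bg where Bg: "\<forall>z\<in>frontier \<Omega>. \<bar>g z\<bar> \<le> Bg" using gb unfolding bounded_iff by auto
    obtain Bf where Bf: "\<forall>z\<in>\<Omega>. \<bar>f z\<bar> \<le> Bf" using fb unfolding bounded_iff by auto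
    have gG: "\<forall>z\<in>frontier \<Omega>. \<bar>g z\<bar> \<le> G"
      unfolding G_def by (intro ballI cSUP_upper bdd_aboveI2[where M=Bg]) (use Bg in auto)
    have fF: "\<forall>z\<in>\<Omega>. \<bar>f z\<bar> \<le> F"
      unfolding F_def by (intro ballI cSUP_upper bdd_aboveI2[where M=Bf]) (use Bf in auto)
    have F0: "F \<ge> 0" using fF ne by force
    have ubound: "\<forall>x\<in>closure \<Omega>. \<bar>u i x\<bar> \<le> Mb G F" if "eps i \<le> 1" for i
    proof -
      have "\<forall>x\<in>frontier \<Omega>. \<bar>u i x\<bar> \<le> G" using gG ubd[of i] by simp
      from u_bound[OF op fr Wb W0 epos[of i] that ub[of i] ueq[of i] fF this F0]
      show ?thesis by (simp add: Mb_def K_def)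
    qed
    show "\<forall>\<delta>>0. \<exists>N::nat. \<forall>i>N. \<forall>x\<in>inner_set \<Omega> r. \<forall>y\<in>inner_set \<Omega> r.
            dOm \<Omega> x y < ereal \<delta> \<longrightarrow>
            \<bar>u i x - u i y\<bar> \<le> C (SUP z\<in>frontier \<Omega>. \<bar>g z\<bar>) (SUP z\<in>\<Omega>. \<bar>f z\<bar>) * \<delta>"
    proof (intro allI impI)
      fix \<delta> :: real assume d0: "\<delta> > 0"
      define c0 where "c0 = min 1 (min (r/8) \<delta>)"
      have c0p: "c0 > 0" using d0 r0 by (simp add: c0_def)
      have "eventually (\<lambda>i. eps i < c0) sequentially" by (rule order_tendstoD(2)[OF elim c0p])
      then obtain N where N: "\<And>i. i \<ge> N \<Longrightarrow> eps i < c0" unfolding eventually_sequentially by blast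
      show "\<exists>N::nat. \<forall>i>N. \<forall>x\<in>inner_set \<Omega> r. \<forall>y\<in>inner_set \<Omega> r.
            dOm \<Omega> x y < ereal \<delta> \<longrightarrow>
            \<bar>u i x - u i y\<bar> \<le> C (SUP z\<in>frontier \<Omega>. \<bar>g z\<bar>) (SUP z\<in>\<Omega>. \<bar>f z\<bar>) * \<delta>"
      proof (intro exI[of _ N] allI impI ballI)
        fix i x y assume i: "i > N" and x: "x \<in> inner_set \<Omega> r" and y: "y \<in> inner_set \<Omega> r"
          and dxy: "dOm \<Omega> x y < ereal \<delta>"
        define e where "e = eps i"
        have e0: "e > 0" using epos by (simp add: e_def)
        have ec: "e < c0" using N i by (simp add: e_def)
        hence e1: "e \<le> 1" and er: "e \<le> r/8" and ed: "e < \<delta>" by (auto simp: c0_def)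
        define M where "M = Mb G F"
        have uM: "\<forall>x\<in>closure \<Omega>. \<bar>u i x\<bar> \<le> M" using ubound[of i] e1 by (simp add: M_def e_def)
        have xO: "x \<in> \<Omega>" and yO: "y \<in> \<Omega>" using x y by (auto simp: inner_set_def)
        hence xc: "x \<in> closure \<Omega>" and yc: "y \<in> closure \<Omega>" using closure_subset by auto
        have ux: "\<bar>u i x\<bar> \<le> M" and uy: "\<bar>u i y\<bar> \<le> M" using uM xc yc by auto
        have M0: "M \<ge> 0" using ux by linarith
        have lam0: "lam G F \<ge> 0" using M0 F0 r0 unfolding lam_def M_def by simp
        have CG: "C G F \<ge> 8 * M / r" "C G F \<ge> 3 * lam G F" by (auto simp: C_def M_def)
        have "\<bar>u i x - u i y\<bar> \<le> C G F * \<delta>"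
        proof (cases "\<delta> \<ge> r/4")
          case True
          have "\<bar>u i x - u i y\<bar> \<le> 2*M" using ux uy by linarith
          also have "2*M = 8*M/r * (r/4)" using r0 by simp
          also have "\<dots> \<le> 8*M/r * \<delta>" using True M0 r0 by (intro mult_left_mono) auto
          also have "\<dots> \<le> C G F * \<delta>" using CG d0 by (intro mult_right_mono) auto
          finally show ?thesis .
        next
          case False
          hence dr: "\<delta> < r/4" by simp
          have "ereal (dist x y) < ereal \<delta>" using dOm_ge_dist[of x y \<Omega>] dxy by (meson order.strict_trans1)
          hence dd: "dist x y < \<delta>" by simp
          have bx: "ball x r \<subseteq> \<Omega>" by (rule inner_ball[OF op fr x])
          define m where "m = nat \<lceil>dist x y / e\<rceil> + 1"
          have t0: "dist x y / e \<ge> 0" using e0 by simp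
          hence rc: "real (nat \<lceil>dist x y / e\<rceil>) = of_int \<lceil>dist x y / e\<rceil>" by simp
          have cc: "of_int \<lceil>dist x y / e\<rceil> - 1 < dist x y / e \<and> dist x y / e \<le> of_int \<lceil>dist x y / e\<rceil>"
            by (rule ceiling_correct)
          have rm: "real m = real (nat \<lceil>dist x y / e\<rceil>) + 1" by (simp add: m_def)
          have m1: "real m > dist x y / e" using rm rc cc by linarith
          have m2: "real m \<le> dist x y / e + 2" using rm rc cc by linarith
          have mpos: "real m > 0" unfolding m_def by simp
          define p where "p j = x + (real j / real m) *\<^sub>R (y - x)" for j
          have p0: "p 0 = x" by (simp add: p_def)
          have pm: "p m = y" using mpos by (simp add: p_def)
          have pstep: "dist (p j) (p (Suc j)) < e" for j
          proof -
            have "p (Suc j) - p j = (real (Suc j) / real m) *\<^sub>R (y - x) - (real j / real m) *\<^sub>R (y - x)"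
              unfolding p_def by simp
            also have "\<dots> = (real (Suc j) / real m - real j / real m) *\<^sub>R (y - x)"
              by (rule scaleR_diff_left[symmetric])
            also have "real (Suc j) / real m - real j / real m = 1 / real m"
              by (simp add: diff_divide_distrib[symmetric])
            finally have "p (Suc j) - p j = (1 / real m) *\<^sub>R (y - x)" .
            hence "norm (p (Suc j) - p j) = (1 / real m) * norm (y - x)" using mpos by simp
            hence "dist (p j) (p (Suc j)) = dist x y / real m"
              by (simp add: dist_norm norm_minus_commute[of "p j"] norm_minus_commute[of y] dist_commute)
            also have "\<dots> < e" using m1 mpos e0 by (simp add: field_simps)
            finally show ?thesis .
          qed
          have pball: "ball (p j) (r/2) \<subseteq> \<Omega>" if "j \<le> m" for j
          proof -
            have "x - p j = - ((real j / real m) *\<^sub>R (y - x))" unfolding p_def by simp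
            hence "dist x (p j) = (real j / real m) * norm (y - x)"
              using mpos by (simp add: dist_norm)
            hence "dist x (p j) = (real j / real m) * dist x y"
              by (simp add: dist_norm norm_minus_commute[of y])
            also have "\<dots> \<le> 1 * dist x y" using that mpos by (intro mult_right_mono) auto
            finally have "dist x (p j) < r/4" using dd dr by simp
            have "ball (p j) (r/2) \<subseteq> ball x r"
            proof
              fix w assume "w \<in> ball (p j) (r/2)"
              hence "dist (p j) w < r/2" by simp
              moreover have "dist x w \<le> dist x (p j) + dist (p j) w" by (rule dist_triangle)
              ultimately have "dist x w < r" using \<open>dist x (p j) < r/4\<close> r0 by linarith
              thus "w \<in> ball x r" by simp
            qed
            thus ?thesis using bx by blast
          qed
          have eR: "4*e \<le> r/2" using er by simp
          have ueq': "\<forall>x\<in>\<Omega>. eps_inf_lap \<Omega> e (u i) x = e^2 * f x" using ueq[of i] by (simp add: e_def)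
          have step: "\<bar>u i (p (Suc j)) - u i (p j)\<bar> \<le> e * lam G F" if "j < m" for j
          proof -
            have "\<bar>u i (p (Suc j)) - u i (p j)\<bar> \<le> e * (8*M/(r/2) + 1 + (r/2)*(F+1)/2)"
              using that by (intro local_lip[OF op e0 e1 eR uM ueq' fF pball pstep]) simp
            thus ?thesis by (simp add: lam_def M_def)
          qed
          have "u i y - u i x = (\<Sum>j<m. u i (p (Suc j)) - u i (p j))"
            using sum_lessThan_telescope[of "\<lambda>j. u i (p j)" m] p0 pm by simp
          hence "\<bar>u i y - u i x\<bar> \<le> (\<Sum>j<m. \<bar>u i (p (Suc j)) - u i (p j)\<bar>)"
            by (simp only: sum_abs)
          also have "\<dots> \<le> (\<Sum>j<m. e * lam G F)" by (intro sum_mono step) simp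
          also have "\<dots> = (real m * e) * lam G F" by simp
          also have "\<dots> \<le> (3 * \<delta>) * lam G F"
          proof (intro mult_right_mono lam0)
            have "real m * e \<le> (dist x y / e + 2) * e" using m2 e0 by (intro mult_right_mono) auto
            also have "\<dots> = dist x y + 2*e" using e0 by (simp add: field_simps)
            finally show "real m * e \<le> 3 * \<delta>" using dd ed by linarith
          qed
          also have "\<dots> = (3 * lam G F) * \<delta>" by simp
          also have "\<dots> \<le> C G F * \<delta>" using CG d0 by (intro mult_right_mono) auto
          finally show ?thesis by (simp add: abs_minus_commute)
        qed
        thus "\<bar>u i x - u i y\<bar> \<le> C (SUP z\<in>frontier \<Omega>. \<bar>g z\<bar>) (SUP z\<in>\<Omega>. \<bar>f z\<bar>) * \<delta>"
          by (simp add: G_def F_def)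
      qed
    qed
  qed
qed

end
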